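(* System 3 has exactly four fixed points, the double poles $p_{\varepsilon_1,\varepsilon_2}=((0,0,\varepsilon_11),(0,0,\varepsilon_21))$, $\varepsilon_1,\varepsilon_2\in\{+,-\}$. The fixed points $p_{+,+}$, $p_{+,-}$ and $p_{-,+}$ are non-degenerate of elliptic-elliptic type for all $t\in[0,1]$, while $p_{-,-}$ is non-degenerate of elliptic-elliptic type if $t<t^-$ or $t>t^+$, non-degenerate of focus-focus type if $t^-<t<t^+$, and degenerate if $t\in\{t^-,t^+\}$, where $$t^\pm=\frac{R_2}{2R_2+R_1\mp2\sqrt{R_1R_2}}.$$
   Context: Let $0<R_1<R_2$ and $t\in[0,1]$. On $M=S^2\times S^2$ with Cartesian coordinates $(x_i,y_i,z_i)$, $x_i^2+y_i^2+z_i^2=1$, and cylindrical coordinates $(\theta_i,z_i)$, $\theta_i=\arg(x_i+iy_i)$, System 3 is the $b$-integrable system with $Z=\{z_2=0\}$, $b$-symplectic form $\omega=R_1\,dz_1\wedge d\theta_1+R_2\frac{dz_2}{z_2}\wedge d\theta_2$ (in the local chart $(x_1,y_1,x_2,y_2)$ on $\{\varepsilon_1z_1>0,\varepsilon_2z_2>0\}$: $\omega=-\varepsilon_1\frac{R_1}{\sqrt{1-x_1^2-y_1^2}}dx_1\wedge dy_1-\frac{R_2}{1-x_2^2-y_2^2}dx_2\wedge dy_2$), and $L=R_1z_1+R_2\log|z_2|$, $H=(1-t)z_1+t(x_1x_2+y_1y_2+z_1z_2)$. A fixed point is a point where $dL=dH=0$. A fixed point $p$ with $\Omega$ the matrix of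 $\omega$ at $p$ is non-degenerate if $A_L=\Omega^{-1}d^2L(p)$, $A_H=\Omega^{-1}d^2H(p)$ span a Cartan subalgebra of $\mathfrak{sp}(4,\mathbb R)$; it is elliptic-elliptic if some combination $c_1A_L+c_2A_H$ has four distinct eigenvalues $\pm i\alpha,\pm i\beta$ ($\alpha\ne\beta$ nonzero reals) and focus-focus if such a combination has eigenvalues $\pm\alpha\pm i\beta$ with $\alpha,\beta$ nonzero reals. *)

theory Defs
  imports "HOL-Analysis.Analysis"
begin

text \<open>Points of M = S^2 x S^2 are pairs of unit vectors in R^3; coordinates
  (x,y,z) = (v$1, v$2, v$3).\<close>

type_synonym pt = "(real^3) \<times> (real^3)"

definition S2 :: "(real^3) set" where
  "S2 = {v. norm v = 1}"

definition M :: "pt set" where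
  "M = S2 \<times> S2"

definition tangent :: "pt \<Rightarrow> pt set" where
  "tangent p = {(a, b). a \<bullet> fst p = 0 \<and> b \<bullet> snd p = 0}"

definition Lfun :: "real \<Rightarrow> real \<Rightarrow> pt \<Rightarrow> real" where
  "Lfun R1 R2 q = R1 * (fst q $ 3) + R2 * ln \<bar>snd q $ 3\<bar>"

definition Hfun :: "real \<Rightarrow> pt \<Rightarrow> real" where
  "Hfun t q = (1 - t) * (fst q $ 3)
     + t * (fst q $ 1 * snd q $ 1 + fst q $ 2 * snd q $ 2 + fst q $ 3 * snd q $ 3)"

definition critical_on_M :: "(pt \<Rightarrow> real) \<Rightarrow> pt \<Rightarrow> bool" where
  "critical_on_M f p \<longleftrightarrow> (\<exists>D. (f has_derivative D) (at p) \<and> (\<forall>v\<in>tangent p. D v = 0))"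

text \<open>Fixed points of System 3: points of M \ Z with dL = dH = 0.\<close>

definition fixed_point :: "real \<Rightarrow> real \<Rightarrow> real \<Rightarrow> pt \<Rightarrow> bool" where
  "fixed_point R1 R2 t p \<longleftrightarrow> p \<in> M \<and> snd p $ 3 \<noteq> 0
      \<and> critical_on_M (Lfun R1 R2) p \<and> critical_on_M (Hfun t) p"

definition pole :: "real \<Rightarrow> real \<Rightarrow> pt" where
  "pole e1 e2 = (vector [0, 0, e1], vector [0, 0, e2])"

definition chart :: "real \<Rightarrow> real \<Rightarrow> real^4 \<Rightarrow> pt" where
  "chart e1 e2 u =
     (vector [u$1, u$2, e1 * sqrt (1 - (u$1)\<^sup>2 - (u$2)\<^sup>2)],
      vector [u$3, u$4, e2 * sqrt (1 - (u$3)\<^sup>2 - (u$4)\<^sup>2)])"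

text \<open>Matrix of omega in the chart at chart coordinates u (omega(v,w) = v^T Omega w).\<close>

definition omega_mat :: "real \<Rightarrow> real \<Rightarrow> real \<Rightarrow> real^4 \<Rightarrow> real^4^4" where
  "omega_mat R1 R2 e1 u =
     (let a = - e1 * R1 / sqrt (1 - (u$1)\<^sup>2 - (u$2)\<^sup>2);
          b = - R2 / (1 - (u$3)\<^sup>2 - (u$4)\<^sup>2)
      in \<chi> i j. if i = 1 \<and> j = 2 then a else if i = 2 \<and> j = 1 then - a
                else if i = 3 \<and> j = 4 then b else if i = 4 \<and> j = 3 then - b else 0)"

definition pd :: "4 \<Rightarrow> (real^4 \<Rightarrow> real) \<Rightarrow> real^4 \<Rightarrow> real" where
  "pd i f u = deriv (\<lambda>s. f (u + s *\<^sub>R axis i 1)) 0"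

definition hessian :: "(real^4 \<Rightarrow> real) \<Rightarrow> real^4 \<Rightarrow> real^4^4" where
  "hessian f u = (\<chi> i j. pd i (pd j f) u)"

definition comm :: "real^4^4 \<Rightarrow> real^4^4 \<Rightarrow> real^4^4" where
  "comm A B = A ** B - B ** A"

definition sp :: "real^4^4 \<Rightarrow> (real^4^4) set" where
  "sp \<Omega> = {A. transpose A ** \<Omega> + \<Omega> ** A = 0}"

fun lcs :: "(real^4^4) set \<Rightarrow> nat \<Rightarrow> (real^4^4) set" where
  "lcs h 0 = h"
| "lcs h (Suc n) = span {comm A B | A B. A \<in> h \<and> B \<in> lcs h n}"

definition nilpotent_lie :: "(real^4^4) set \<Rightarrow> bool" where
  "nilpotent_lie h \<longleftrightarrow> (\<exists>n. lcs h n = {0})"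

definition cartan_subalgebra :: "real^4^4 \<Rightarrow> (real^4^4) set \<Rightarrow> bool" where
  "cartan_subalgebra \<Omega> h \<longleftrightarrow>
     subspace h \<and> h \<subseteq> sp \<Omega> \<and> (\<forall>A\<in>h. \<forall>B\<in>h. comm A B \<in> h)
     \<and> nilpotent_lie h \<and> {X \<in> sp \<Omega>. \<forall>A\<in>h. comm X A \<in> h} = h"

definition ceigs :: "real^4^4 \<Rightarrow> complex set" where
  "ceigs A = {\<mu>. \<exists>v :: complex^4. v \<noteq> 0 \<and>
       (\<chi> i j. complex_of_real (A $ i $ j)) *v v = \<mu> *s v}"

definition A_L :: "real \<Rightarrow> real \<Rightarrow> real \<Rightarrow> real \<Rightarrow> real^4^4" where
  "A_L R1 R2 e1 e2 = matrix_inv (omega_mat R1 R2 e1 0) ** hessian (Lfun R1 R2 \<circ> chart e1 e2) 0"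

definition A_H :: "real \<Rightarrow> real \<Rightarrow> real \<Rightarrow> real \<Rightarrow> real \<Rightarrow> real^4^4" where
  "A_H R1 R2 t e1 e2 = matrix_inv (omega_mat R1 R2 e1 0) ** hessian (Hfun t \<circ> chart e1 e2) 0"

definition nondegenerate_pole :: "real \<Rightarrow> real \<Rightarrow> real \<Rightarrow> real \<Rightarrow> real \<Rightarrow> bool" where
  "nondegenerate_pole R1 R2 t e1 e2 \<longleftrightarrow>
     cartan_subalgebra (omega_mat R1 R2 e1 0) (span {A_L R1 R2 e1 e2, A_H R1 R2 t e1 e2})"

definition elliptic_elliptic_pole :: "real \<Rightarrow> real \<Rightarrow> real \<Rightarrow> real \<Rightarrow> real \<Rightarrow> bool" where
  "elliptic_elliptic_pole R1 R2 t e1 e2 \<longleftrightarrow>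
     (\<exists>c1 c2 \<alpha> \<beta> :: real. \<alpha> \<noteq> \<beta> \<and> \<alpha> \<noteq> 0 \<and> \<beta> \<noteq> 0 \<and>
        ceigs (c1 *\<^sub>R A_L R1 R2 e1 e2 + c2 *\<^sub>R A_H R1 R2 t e1 e2)
          = {\<i> * \<alpha>, - \<i> * \<alpha>, \<i> * \<beta>, - \<i> * \<beta>}
        \<and> card {\<i> * complex_of_real \<alpha>, - \<i> * \<alpha>, \<i> * \<beta>, - \<i> * \<beta>} = 4)"

definition focus_focus_pole :: "real \<Rightarrow> real \<Rightarrow> real \<Rightarrow> real \<Rightarrow> real \<Rightarrow> bool" where
  "focus_focus_pole R1 R2 t e1 e2 \<longleftrightarrow>
     (\<exists>c1 c2 \<alpha> \<beta> :: real. \<alpha> \<noteq> 0 \<and> \<beta> \<noteq> 0 \<and>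
        ceigs (c1 *\<^sub>R A_L R1 R2 e1 e2 + c2 *\<^sub>R A_H R1 R2 t e1 e2)
          = {Complex \<alpha> \<beta>, Complex \<alpha> (-\<beta>), Complex (-\<alpha>) \<beta>, Complex (-\<alpha>) (-\<beta>)})"

definition t_minus :: "real \<Rightarrow> real \<Rightarrow> real" where
  "t_minus R1 R2 = R2 / (2 * R2 + R1 + 2 * sqrt (R1 * R2))"

definition t_plus :: "real \<Rightarrow> real \<Rightarrow> real" where
  "t_plus R1 R2 = R2 / (2 * R2 + R1 - 2 * sqrt (R1 * R2))"

end

theory Submission
  imports Defs
begin


lemma has_derivative_vec_nth' [derivative_intros]:
  "(f has_derivative f') F \<Longrightarrow> ((\<lambda>x. f x $ i) has_derivative (\<lambda>h. f' h $ i)) F"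
  by (rule bounded_linear.has_derivative[OF bounded_linear_vec_nth])

lemma DERIV_ln_abs: "(x::real) \<noteq> 0 \<Longrightarrow> DERIV (\<lambda>x. ln \<bar>x\<bar>) x :> 1 / x"
proof (cases "x > 0")
  case True
  show ?thesis
    apply (rule has_field_derivative_transform_within_open[where S="{0<..}"])
    using DERIV_ln_divide[OF True] True by auto
next
  case False
  assume "x \<noteq> 0"
  with False have x: "x < 0" by simp
  have "DERIV (\<lambda>x. ln (- x)) x :> 1 / x"
    using x by (auto intro!: derivative_eq_intros simp: field_simps)
  then show ?thesis
    apply (rule has_field_derivative_transform_within_open[where S="{..<0}"])
    using x by auto
qed

definition DL :: "real \<Rightarrow> real \<Rightarrow> pt \<Rightarrow> pt \<Rightarrow> real" where
  "DL R1 R2 p h = R1 * (fst h $ 3) + R2 * ((snd h $ 3) / (snd p $ 3))"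

lemma Lfun_deriv:
  assumes "snd p $ 3 \<noteq> 0"
  shows "(Lfun R1 R2 has_derivative DL R1 R2 p) (at p)"
proof -
  have "((\<lambda>q. ln \<bar>snd q $ 3\<bar>) has_derivative (\<lambda>h. (snd h $ 3) * (1 / (snd p $ 3)))) (at p)"
    by (rule DERIV_compose_FDERIV[where g="\<lambda>q. snd q $ 3", OF DERIV_ln_abs[OF assms]]) (auto intro!: derivative_eq_intros)
  then have "((\<lambda>q. R2 * ln \<bar>snd q $ 3\<bar>) has_derivative (\<lambda>h. R2 * ((snd h $ 3) * (1 / (snd p $ 3))))) (at p)"
    by (rule has_derivative_mult_right)
  moreover have "((\<lambda>q. R1 * (fst q $ 3)) has_derivative (\<lambda>h. R1 * (fst h $ 3))) (at p)"
    by (auto intro!: derivative_eq_intros)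
  ultimately show ?thesis
    unfolding Lfun_def[abs_def] DL_def[abs_def]
    by (auto dest: has_derivative_add)
qed

definition DH :: "real \<Rightarrow> pt \<Rightarrow> pt \<Rightarrow> real" where
  "DH t p h = (1 - t) * (fst h $ 3)
     + t * (fst h $ 1 * snd p $ 1 + fst p $ 1 * snd h $ 1 + fst h $ 2 * snd p $ 2 + fst p $ 2 * snd h $ 2
            + fst h $ 3 * snd p $ 3 + fst p $ 3 * snd h $ 3)"

lemma Hfun_deriv: "(Hfun t has_derivative DH t p) (at p)"
  unfolding Hfun_def[abs_def] DH_def[abs_def]
  by (auto intro!: derivative_eq_intros simp: algebra_simps)



lemma norm1_iff: "norm (v::real^3) = 1 \<longleftrightarrow> (v$1)\<^sup>2 + (v$2)\<^sup>2 + (v$3)\<^sup>2 = 1"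
  by (simp add: norm_eq_1 inner_vec_def sum_3 power2_eq_square)

lemma inner3: "(a::real^3) \<bullet> b = a$1*b$1 + a$2*b$2 + a$3*b$3"
  by (simp add: inner_vec_def sum_3)

lemma vec3_eq: "(v::real^3) = vector [x,y,z] \<longleftrightarrow> v$1 = x \<and> v$2 = y \<and> v$3 = z"
  by (auto simp: vec_eq_iff forall_3)

lemma pole_nth: "fst (pole e1 e2) $ 1 = 0" "fst (pole e1 e2) $ 2 = 0" "fst (pole e1 e2) $ 3 = e1"
  "snd (pole e1 e2) $ 1 = 0" "snd (pole e1 e2) $ 2 = 0" "snd (pole e1 e2) $ 3 = e2"
  by (simp_all add: pole_def)

lemma unit_z: "(v::real^3) \<in> S2 \<Longrightarrow> (v$3)\<^sup>2 = 1 \<Longrightarrow> v = vector [0,0,v$3]"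
proof -
  assume a: "v \<in> S2" "(v$3)\<^sup>2 = 1"
  then have "(v$1)\<^sup>2 + (v$2)\<^sup>2 = 0" by (simp add: S2_def norm1_iff)
  then have "v$1 = 0" "v$2 = 0" by (auto simp: sum_power2_eq_zero_iff)
  then show ?thesis by (simp add: vec3_eq)
qed

lemma sq1: "(z::real)\<^sup>2 = 1 \<Longrightarrow> z = 1 \<or> z = -1"
  by (simp add: power2_eq_1_iff)

lemma fixed_imp_pole:
  assumes R: "0 < R1" "0 < R2" and fp: "fixed_point R1 R2 t p"
  shows "p \<in> {pole 1 1, pole 1 (-1), pole (-1) 1, pole (-1) (-1)}"
proof -
  obtain v1 v2 where p: "p = (v1, v2)" by (cases p)
  from fp have M: "v1 \<in> S2" "v2 \<in> S2" and z: "v2 $ 3 \<noteq> 0" and cL: "critical_on_M (Lfun R1 R2) p"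
    by (auto simp: fixed_point_def M_def p)
  from cL obtain D where D: "(Lfun R1 R2 has_derivative D) (at p)" and Dt: "\<forall>v\<in>tangent p. D v = 0"
    by (auto simp: critical_on_M_def)
  have "D = DL R1 R2 p" using has_derivative_unique[OF D Lfun_deriv] z p by auto
  with Dt have Dt': "\<And>v. v \<in> tangent p \<Longrightarrow> DL R1 R2 p v = 0" by auto
  have n1: "v1 \<bullet> v1 = 1" "v2 \<bullet> v2 = 1" using M by (auto simp: S2_def norm_eq_1)
  define a where "a = axis 3 1 - (v1$3) *\<^sub>R v1"
  define b where "b = axis 3 1 - (v2$3) *\<^sub>R v2"
  have "a \<bullet> v1 = 0" unfolding a_def using n1
    by (simp add: inner_diff_left inner_axis' )
  then have "(a, 0) \<in> tangent p" by (simp add: tangent_def p)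
  from Dt'[OF this] have "R1 * (1 - (v1$3)\<^sup>2) = 0"
    by (simp add: DL_def p a_def axis_def power2_eq_square)
  with R have e1: "(v1$3)\<^sup>2 = 1" by simp
  have "b \<bullet> v2 = 0" unfolding b_def using n1
    by (simp add: inner_diff_left inner_axis')
  then have "(0, b) \<in> tangent p" by (simp add: tangent_def p)
  from Dt'[OF this] have "R2 * ((1 - (v2$3)\<^sup>2) / v2$3) = 0"
    by (simp add: DL_def p b_def axis_def power2_eq_square)
  with R z have e2: "(v2$3)\<^sup>2 = 1" by simp
  have "v1 = vector [0,0,v1$3]" "v2 = vector [0,0,v2$3]"
    using unit_z M e1 e2 by auto
  then have "p = pole (v1$3) (v2$3)" by (simp add: pole_def p)
  then show ?thesis using sq1[OF e1] sq1[OF e2] by auto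
qed

lemma pole_fixed:
  assumes R: "0 < R1" "0 < R2" and e: "e1 = 1 \<or> e1 = -1" "e2 = 1 \<or> e2 = -1"
  shows "fixed_point R1 R2 t (pole e1 e2)"
proof -
  have M: "pole e1 e2 \<in> M" using e by (auto simp: M_def S2_def norm1_iff pole_def)
  have z: "snd (pole e1 e2) $ 3 \<noteq> 0" using e by (auto simp: pole_def)
  have tg: "fst h $ 3 = 0 \<and> snd h $ 3 = 0" if "h \<in> tangent (pole e1 e2)" for h
    using that e by (auto simp: tangent_def pole_def inner3)
  have cL: "critical_on_M (Lfun R1 R2) (pole e1 e2)"
    unfolding critical_on_M_def
  proof (intro exI conjI ballI)
    show "(Lfun R1 R2 has_derivative DL R1 R2 (pole e1 e2)) (at (pole e1 e2))" by (rule Lfun_deriv[OF z])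
    fix v assume "v \<in> tangent (pole e1 e2)"
    then show "DL R1 R2 (pole e1 e2) v = 0" using tg by (auto simp: DL_def)
  qed
  have cH: "critical_on_M (Hfun t) (pole e1 e2)"
    unfolding critical_on_M_def
  proof (intro exI conjI ballI)
    show "(Hfun t has_derivative DH t (pole e1 e2)) (at (pole e1 e2))" by (rule Hfun_deriv)
    fix v assume "v \<in> tangent (pole e1 e2)"
    then show "DH t (pole e1 e2) v = 0" using tg by (auto simp: DH_def pole_nth)
  qed
  show ?thesis using M z cL cH by (simp add: fixed_point_def)
qed

lemma fixed_set:
  assumes R: "0 < R1" "0 < R2"
  shows "{p. fixed_point R1 R2 t p} = {pole 1 1, pole 1 (-1), pole (-1) 1, pole (-1) (-1)}"
  using fixed_imp_pole[OF R] pole_fixed[OF R] by blast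



lemma DERIV_ln_abs_chain [derivative_intros]:
  "(g has_real_derivative g') (at x within S) \<Longrightarrow> g x \<noteq> 0 \<Longrightarrow>
   ((\<lambda>x. ln \<bar>g x\<bar>) has_real_derivative (g' / g x)) (at x within S)"
proof -
  assume a: "(g has_real_derivative g') (at x within S)" "g x \<noteq> 0"
  from DERIV_chain2[OF DERIV_ln_abs[OF a(2)] a(1)] show ?thesis by (simp add: field_simps)
qed
  
definition U4 :: "(real^4) set" where
  "U4 = {u. (u$1)\<^sup>2 + (u$2)\<^sup>2 < 1 \<and> (u$3)\<^sup>2 + (u$4)\<^sup>2 < 1}"

lemma U4_open: "open U4"
  unfolding U4_def
  by (intro open_Collect_conj open_Collect_less continuous_intros)

lemma U4_0: "0 \<in> U4" by (simp add: U4_def)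

lemma pd_eq: "((\<lambda>s. f (u + s *\<^sub>R axis i 1)) has_real_derivative D) (at 0) \<Longrightarrow> pd i f u = D"
  unfolding pd_def by (rule DERIV_imp_deriv)

lemma pd2:
  assumes "\<And>u. u \<in> U4 \<Longrightarrow> pd j f u = G u"
    and "((\<lambda>s. G (s *\<^sub>R axis i 1)) has_real_derivative D) (at 0)"
  shows "pd i (pd j f) 0 = D"
proof (rule pd_eq)
  have op: "open {s::real. s *\<^sub>R axis i (1::real) \<in> U4}"
  proof -
    have "continuous_on UNIV (\<lambda>s::real. s *\<^sub>R axis i (1::real))" by (intro continuous_intros)
    then have "\<forall>B. open B \<longrightarrow> open ((\<lambda>s::real. s *\<^sub>R axis i (1::real)) -` B)" by (simp add: continuous_on_open_vimage)
    from this[rule_format, OF U4_open] show ?thesis by (simp add: vimage_def)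
  qed
  show "((\<lambda>s. pd j f (0 + s *\<^sub>R axis i 1)) has_real_derivative D) (at 0)"
    apply (rule has_field_derivative_transform_within_open[OF assms(2) op])
    using U4_0 assms(1) by auto
qed

lemma ax: "(u + s *\<^sub>R axis i (1::real)) $ k = u $ k + (if k = i then s else 0)"
  by (simp add: axis_def)

lemma U4_pos: "u \<in> U4 \<Longrightarrow> 1 - (u$1)\<^sup>2 - (u$2)\<^sup>2 > 0 \<and> 1 - (u$3)\<^sup>2 - (u$4)\<^sup>2 > 0"
  by (auto simp: U4_def)

lemma chartL: "Lfun R1 R2 (chart e1 e2 u) =
   R1 * (e1 * sqrt (1 - (u$1)\<^sup>2 - (u$2)\<^sup>2)) + R2 * ln \<bar>e2 * sqrt (1 - (u$3)\<^sup>2 - (u$4)\<^sup>2)\<bar>"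
  by (simp add: Lfun_def chart_def)

lemma chartH: "Hfun t (chart e1 e2 u) =
   (1 - t) * (e1 * sqrt (1 - (u$1)\<^sup>2 - (u$2)\<^sup>2)) + t * (u$1 * u$3 + u$2 * u$4 +
     (e1 * sqrt (1 - (u$1)\<^sup>2 - (u$2)\<^sup>2)) * (e2 * sqrt (1 - (u$3)\<^sup>2 - (u$4)\<^sup>2)))"
  by (simp add: Hfun_def chart_def)


lemma pdL1: "u \<in> U4 \<Longrightarrow> pd 1 (Lfun R1 R2 \<circ> chart e1 e2) u = - R1 * e1 * u$1 / sqrt (1 - (u$1)\<^sup>2 - (u$2)\<^sup>2)"
  apply (rule pd_eq) apply (simp add: chartL axis_def)
  apply (drule U4_pos)
  apply (auto intro!: derivative_eq_intros)
  apply (simp_all add: field_simps)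
  done

lemma pdL2: "u \<in> U4 \<Longrightarrow> pd 2 (Lfun R1 R2 \<circ> chart e1 e2) u = - R1 * e1 * u$2 / sqrt (1 - (u$1)\<^sup>2 - (u$2)\<^sup>2)"
  apply (rule pd_eq) apply (simp add: chartL axis_def)
  apply (drule U4_pos)
  apply (auto intro!: derivative_eq_intros)
  apply (simp_all add: field_simps)
  done

lemma pdL3: "e2 \<noteq> 0 \<Longrightarrow> u \<in> U4 \<Longrightarrow> pd 3 (Lfun R1 R2 \<circ> chart e1 e2) u = - R2 * u$3 / (1 - (u$3)\<^sup>2 - (u$4)\<^sup>2)"
  apply (rule pd_eq) apply (simp add: chartL axis_def)
  apply (drule U4_pos)
  apply (auto intro!: derivative_eq_intros)
  apply (simp_all add: field_simps)
  done

lemma pdL4: "e2 \<noteq> 0 \<Longrightarrow> u \<in> U4 \<Longrightarrow> pd 4 (Lfun R1 R2 \<circ> chart e1 e2) u = - R2 * u$4 / (1 - (u$3)\<^sup>2 - (u$4)\<^sup>2)"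
  apply (rule pd_eq) apply (simp add: chartL axis_def)
  apply (drule U4_pos)
  apply (auto intro!: derivative_eq_intros)
  apply (simp_all add: field_simps)
  done

lemma pdH1: "u \<in> U4 \<Longrightarrow> pd 1 (Hfun t \<circ> chart e1 e2) u =
   - (1-t) * e1 * u$1 / sqrt (1 - (u$1)\<^sup>2 - (u$2)\<^sup>2) + t * (u$3 - e1 * e2 * u$1 * sqrt (1 - (u$3)\<^sup>2 - (u$4)\<^sup>2) / sqrt (1 - (u$1)\<^sup>2 - (u$2)\<^sup>2))"
  apply (rule pd_eq) apply (simp add: chartH axis_def)
  apply (drule U4_pos)
  apply (auto intro!: derivative_eq_intros)
  apply (simp_all add: field_simps)
  done

lemma pdH2: "u \<in> U4 \<Longrightarrow> pd 2 (Hfun t \<circ> chart e1 e2) u =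
   - (1-t) * e1 * u$2 / sqrt (1 - (u$1)\<^sup>2 - (u$2)\<^sup>2) + t * (u$4 - e1 * e2 * u$2 * sqrt (1 - (u$3)\<^sup>2 - (u$4)\<^sup>2) / sqrt (1 - (u$1)\<^sup>2 - (u$2)\<^sup>2))"
  apply (rule pd_eq) apply (simp add: chartH axis_def)
  apply (drule U4_pos)
  apply (auto intro!: derivative_eq_intros)
  apply (simp_all add: field_simps)
  done

lemma pdH3: "u \<in> U4 \<Longrightarrow> pd 3 (Hfun t \<circ> chart e1 e2) u =
   t * (u$1 - e1 * e2 * u$3 * sqrt (1 - (u$1)\<^sup>2 - (u$2)\<^sup>2) / sqrt (1 - (u$3)\<^sup>2 - (u$4)\<^sup>2))"
  apply (rule pd_eq) apply (simp add: chartH axis_def)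
  apply (drule U4_pos)
  apply (auto intro!: derivative_eq_intros)
  apply (simp_all add: field_simps)
  done

lemma pdH4: "u \<in> U4 \<Longrightarrow> pd 4 (Hfun t \<circ> chart e1 e2) u =
   t * (u$2 - e1 * e2 * u$4 * sqrt (1 - (u$1)\<^sup>2 - (u$2)\<^sup>2) / sqrt (1 - (u$3)\<^sup>2 - (u$4)\<^sup>2))"
  apply (rule pd_eq) apply (simp add: chartH axis_def)
  apply (drule U4_pos)
  apply (auto intro!: derivative_eq_intros)
  apply (simp_all add: field_simps)
  done


definition kI :: "real \<Rightarrow> real \<Rightarrow> real \<Rightarrow> real \<Rightarrow> real^4^4" where
  "kI a b c d = (\<chi> i j. if i = 1 then (if j = 1 then a else if j = 3 then b else 0)
     else if i = 2 then (if j = 2 then a else if j = 4 then b else 0)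
     else if i = 3 then (if j = 1 then c else if j = 3 then d else 0)
     else (if j = 2 then c else if j = 4 then d else 0))"

definition kr :: "real \<Rightarrow> real \<Rightarrow> real \<Rightarrow> real \<Rightarrow> real^4^4" where
  "kr a b c d = (\<chi> i j. if i = 1 then (if j = 2 then -a else if j = 4 then -b else 0)
     else if i = 2 then (if j = 1 then a else if j = 3 then b else 0)
     else if i = 3 then (if j = 2 then -c else if j = 4 then -d else 0)
     else (if j = 1 then c else if j = 3 then d else 0))"

lemma hessL: "e2 \<noteq> 0 \<Longrightarrow> hessian (Lfun R1 R2 \<circ> chart e1 e2) 0 = kI (- R1 * e1) 0 0 (- R2)"
  unfolding hessian_def kI_def vec_eq_iff forall_4
  apply simp
  apply (intro conjI)
  apply (rule pd2, (erule pdL1 | erule pdL2 | erule pdL3[rotated] | erule pdL4[rotated]), assumption?,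
         auto intro!: derivative_eq_intros simp: axis_def)+
  done

lemma hessH: "hessian (Hfun t \<circ> chart e1 e2) 0 = kI (- (1-t) * e1 - t * e1 * e2) t t (- t * e1 * e2)"
  unfolding hessian_def kI_def vec_eq_iff forall_4
  apply simp
  apply (intro conjI)
  apply (rule pd2, (erule pdH1 | erule pdH2 | erule pdH3 | erule pdH4),
         auto intro!: derivative_eq_intros simp: axis_def)+
  done



lemma kr_kI: "kr a b c d ** kI p q r w = kr (a*p + b*r) (a*q+b*w) (c*p+d*r) (c*q+d*w)"
  by (simp add: kr_def kI_def matrix_matrix_mult_def vec_eq_iff forall_4 sum_4 algebra_simps)

lemma kr_kr: "kr a b c d ** kr p q r w = kI (-(a*p + b*r)) (-(a*q+b*w)) (-(c*p+d*r)) (-(c*q+d*w))"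
  by (simp add: kr_def kI_def matrix_matrix_mult_def vec_eq_iff forall_4 sum_4 algebra_simps)

lemma kr_lin: "x *\<^sub>R kr a b c d + y *\<^sub>R kr p q r w = kr (x*a+y*p) (x*b+y*q) (x*c+y*r) (x*d+y*w)"
  by (simp add: kr_def vec_eq_iff forall_4 algebra_simps)

lemma kr_scale: "x *\<^sub>R kr a b c d = kr (x*a) (x*b) (x*c) (x*d)"
  by (simp add: kr_def vec_eq_iff forall_4 algebra_simps)

lemma kr_mat1: "a \<noteq> 0 \<Longrightarrow> d \<noteq> 0 \<Longrightarrow> kr a 0 0 d ** kr (-1/a) 0 0 (-1/d) = mat 1"
  by (simp add: kr_def mat_def matrix_matrix_mult_def vec_eq_iff forall_4 sum_4)

lemma kr_mat1': "a \<noteq> 0 \<Longrightarrow> d \<noteq> 0 \<Longrightarrow> kr (-1/a) 0 0 (-1/d) ** kr a 0 0 d = mat 1"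
  by (simp add: kr_def mat_def matrix_matrix_mult_def vec_eq_iff forall_4 sum_4)

lemma kr_cong: "a=a' \<Longrightarrow> b=b' \<Longrightarrow> c=c' \<Longrightarrow> d=d' \<Longrightarrow> kr a b c d = kr a' b' c' d'" by simp

lemma matrix_inv_eq:
  fixes A B :: "real^4^4"
  assumes "A ** B = mat 1" "B ** A = mat 1"
  shows "matrix_inv A = B"
proof -
  have ex: "\<exists>C::real^4^4. A ** C = mat 1 \<and> C ** A = mat 1" using assms by blast
  define C where "C = matrix_inv A"
  have C: "A ** C = mat 1" "C ** A = mat 1"
    using someI_ex[OF ex] unfolding C_def matrix_inv_def by auto
  have "C = (B ** A) ** C" using assms by (simp add: matrix_mul_lid)
  also have "\<dots> = B ** (A ** C)" by (simp add: matrix_mul_assoc)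
  also have "\<dots> = B" using C by (simp add: matrix_mul_rid)
  finally show ?thesis unfolding C_def .
qed

lemma omega0: "omega_mat R1 R2 e1 0 = kr (e1 * R1) 0 0 R2"
  by (simp add: omega_mat_def kr_def vec_eq_iff forall_4 Let_def)

lemma omega_inv: "e1 * R1 \<noteq> 0 \<Longrightarrow> R2 \<noteq> 0 \<Longrightarrow>
  matrix_inv (omega_mat R1 R2 e1 0) = kr (-1/(e1*R1)) 0 0 (-1/R2)"
  unfolding omega0
  apply (rule matrix_inv_eq)
  using kr_mat1 kr_mat1' by auto

lemma AL_eq: "e1 \<noteq> 0 \<Longrightarrow> R1 \<noteq> 0 \<Longrightarrow> R2 \<noteq> 0 \<Longrightarrow> e2 \<noteq> 0 \<Longrightarrow> A_L R1 R2 e1 e2 = kr 1 0 0 1"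
  unfolding A_L_def by (simp add: omega_inv hessL kr_kI)

definition aH :: "real \<Rightarrow> real \<Rightarrow> real \<Rightarrow> real" where "aH R1 t e2 = (1 - t + t*e2)/R1"
definition bH :: "real \<Rightarrow> real \<Rightarrow> real \<Rightarrow> real" where "bH R1 t e1 = - t/(e1*R1)"
definition cH :: "real \<Rightarrow> real \<Rightarrow> real" where "cH R2 t = - t/R2"
definition dH :: "real \<Rightarrow> real \<Rightarrow> real \<Rightarrow> real \<Rightarrow> real" where "dH R2 t e1 e2 = t*e1*e2/R2"

lemma AH_eq: "e1 \<noteq> 0 \<Longrightarrow> R1 \<noteq> 0 \<Longrightarrow> R2 \<noteq> 0 \<Longrightarrow>
   A_H R1 R2 t e1 e2 = kr (aH R1 t e2) (bH R1 t e1) (cH R2 t) (dH R2 t e1 e2)"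
  unfolding A_H_def apply (simp add: omega_inv hessH kr_kI aH_def bH_def cH_def dH_def)
  apply (rule kr_cong) apply (simp_all add: field_simps)
  done



lemma ev2:
  fixes a b c d x :: complex
  assumes "(a - x) * (d - x) - b * c = 0"
  shows "\<exists>w1 w2. (w1 \<noteq> 0 \<or> w2 \<noteq> 0) \<and> (a - x) * w1 + b * w2 = 0 \<and> c * w1 + (d - x) * w2 = 0"
proof (cases "b = 0")
  case False
  show ?thesis
    apply (rule exI[of _ b], rule exI[of _ "x - a"])
    using False assms by (auto simp: algebra_simps)
next
  case b: True
  show ?thesis
  proof (cases "c = 0")
    case False
    show ?thesis
      apply (rule exI[of _ "x - d"], rule exI[of _ c])
      using False assms b by (auto simp: algebra_simps)
  next
    case c: True
    with b assms have "x = a \<or> x = d" by auto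
    then show ?thesis
    proof
      assume "x = a" then show ?thesis using b c by (intro exI[of _ 1] exI[of _ 0]) auto
    next
      assume "x = d" then show ?thesis using b c by (intro exI[of _ 0] exI[of _ 1]) auto
    qed
  qed
qed

definition cpoly :: "real \<Rightarrow> real \<Rightarrow> real \<Rightarrow> real \<Rightarrow> complex \<Rightarrow> complex" where
  "cpoly a b c d x = (of_real a - x) * (of_real d - x) - of_real b * of_real c"

lemma kr_eig_iff:
  "(\<chi> i j. complex_of_real (kr a b c d $ i $ j)) *v v = \<mu> *s v \<longleftrightarrow>
     (- of_real a * v$2 - of_real b * v$4 = \<mu> * v$1 \<and> of_real a * v$1 + of_real b * v$3 = \<mu> * v$2 \<and>
      - of_real c * v$2 - of_real d * v$4 = \<mu> * v$3 \<and> of_real c * v$1 + of_real d * v$3 = \<mu> * v$4)"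
  by (simp add: kr_def vec_eq_iff forall_4 matrix_vector_mult_def sum_4 eq_commute)

lemma vec4_eq0: "(v::complex^4) = 0 \<longleftrightarrow> v$1 = 0 \<and> v$2 = 0 \<and> v$3 = 0 \<and> v$4 = 0"
  by (simp add: vec_eq_iff forall_4)

lemma ceigs_kr: "ceigs (kr a b c d) = {\<mu>. \<exists>x. cpoly a b c d x = 0 \<and> (\<mu> = \<i> * x \<or> \<mu> = - \<i> * x)}"
proof (intro set_eqI iffI)
  fix \<mu> assume "\<mu> \<in> ceigs (kr a b c d)"
  then obtain v :: "complex^4" where v0: "v \<noteq> 0" and E: "- of_real a * v$2 - of_real b * v$4 = \<mu> * v$1"
      "of_real a * v$1 + of_real b * v$3 = \<mu> * v$2"
      "- of_real c * v$2 - of_real d * v$4 = \<mu> * v$3" "of_real c * v$1 + of_real d * v$3 = \<mu> * v$4"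
    unfolding ceigs_def kr_eig_iff by auto
  have i2: "\<i> * \<i> = -1" by simp
  define A1 where "A1 = v$1 - \<i> * v$2"
  define A2 where "A2 = v$3 - \<i> * v$4"
  define B1 where "B1 = v$1 + \<i> * v$2"
  define B2 where "B2 = v$3 + \<i> * v$4"
  show "\<mu> \<in> {\<mu>. \<exists>x. cpoly a b c d x = 0 \<and> (\<mu> = \<i> * x \<or> \<mu> = - \<i> * x)}"
  proof (cases "A1 = 0 \<and> A2 = 0")
    case False
    define x where "x = \<i> * \<mu>"
    have q1: "(of_real a - x) * A1 + of_real b * A2 = 0"
      unfolding x_def A1_def A2_def using E i2 by algebra
    have q2: "of_real c * A1 + (of_real d - x) * A2 = 0"
      unfolding x_def A1_def A2_def using E i2 by algebra
    have "cpoly a b c d x * A1 = 0" "cpoly a b c d x * A2 = 0"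
      unfolding cpoly_def using q1 q2 by algebra+
    with False have "cpoly a b c d x = 0" by auto
    moreover have "\<mu> = - \<i> * x" unfolding x_def using i2 by algebra
    ultimately show ?thesis by blast
  next
    case True
    have "B1 \<noteq> 0 \<or> B2 \<noteq> 0"
    proof (rule ccontr)
      assume "\<not> (B1 \<noteq> 0 \<or> B2 \<noteq> 0)"
      with True have "v$1 = 0" "v$2 = 0" "v$3 = 0" "v$4 = 0"
        unfolding A1_def A2_def B1_def B2_def using i2 by algebra+
      with v0 show False by (simp add: vec4_eq0)
    qed
    define x where "x = - \<i> * \<mu>"
    have q1: "(of_real a - x) * B1 + of_real b * B2 = 0"
      unfolding x_def B1_def B2_def using E i2 by algebra
    have q2: "of_real c * B1 + (of_real d - x) * B2 = 0"
      unfolding x_def B1_def B2_def using E i2 by algebra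
    have "cpoly a b c d x * B1 = 0" "cpoly a b c d x * B2 = 0"
      unfolding cpoly_def using q1 q2 by algebra+
    with \<open>B1 \<noteq> 0 \<or> B2 \<noteq> 0\<close> have "cpoly a b c d x = 0" by auto
    moreover have "\<mu> = \<i> * x" unfolding x_def using i2 by algebra
    ultimately show ?thesis by blast
  qed
next
  fix \<mu> assume "\<mu> \<in> {\<mu>. \<exists>x. cpoly a b c d x = 0 \<and> (\<mu> = \<i> * x \<or> \<mu> = - \<i> * x)}"
  then obtain x where cx: "cpoly a b c d x = 0" and mu: "\<mu> = \<i> * x \<or> \<mu> = - \<i> * x" by blast
  from ev2[OF cx[unfolded cpoly_def]] obtain w1 w2 where w: "w1 \<noteq> 0 \<or> w2 \<noteq> 0"
    "(of_real a - x) * w1 + of_real b * w2 = 0" "of_real c * w1 + (of_real d - x) * w2 = 0" by blast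
  have i2: "\<i> * \<i> = -1" by simp
  define s :: complex where "s = (if \<mu> = - \<i> * x then \<i> else - \<i>)"
  have s2: "s * s = -1" by (simp add: s_def)
  have smu: "\<mu> = - s * x"
    using mu by (auto simp: s_def)
  define v :: "complex^4" where "v = vector [w1, s * w1, w2, s * w2]"
  have vn: "v$1 = w1" "v$2 = s * w1" "v$3 = w2" "v$4 = s * w2"
    unfolding v_def vector_def by simp_all
  have "v \<noteq> 0" using w by (auto simp: vec4_eq0 vn)
  moreover have "(\<chi> i j. complex_of_real (kr a b c d $ i $ j)) *v v = \<mu> *s v"
    unfolding kr_eig_iff vn smu using w(2,3) s2 by (intro conjI; algebra)
  ultimately show "\<mu> \<in> ceigs (kr a b c d)" unfolding ceigs_def by blast
qed



lemma span2_iff: "x \<in> span {A, B} \<longleftrightarrow> (\<exists>u v. x = u *\<^sub>R A + v *\<^sub>R B)"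
proof
  assume "x \<in> span {A, B}"
  then obtain k where "x - k *\<^sub>R A \<in> span {B}" by (auto simp: span_breakdown_eq)
  then obtain m where "x - k *\<^sub>R A = m *\<^sub>R B" by (auto simp: span_singleton)
  then have "x = k *\<^sub>R A + m *\<^sub>R B" by (simp add: algebra_simps)
  then show "\<exists>u v. x = u *\<^sub>R A + v *\<^sub>R B" by blast
next
  assume "\<exists>u v. x = u *\<^sub>R A + v *\<^sub>R B"
  then obtain u v where "x = u *\<^sub>R A + v *\<^sub>R B" by blast
  then show "x \<in> span {A, B}"
    by (simp add: span_add span_scale span_base)
qed

lemma h_iff: "x \<in> span {kr 1 0 0 1, kr a b c d} \<longleftrightarrow> (\<exists>u v. x = kr (u + v * a) (v * b) (v * c) (u + v * d))"
  unfolding span2_iff kr_lin by simp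

lemma kr_sp: "w1 * q = w2 * r \<Longrightarrow> kr p q r w \<in> sp (kr w1 0 0 w2)"
  by (simp add: sp_def kr_def transpose_def matrix_matrix_mult_def vec_eq_iff forall_4 sum_4 algebra_simps)

lemma kr_eq_iff: "kr p q r w = kr p' q' r' w' \<longleftrightarrow> p = p' \<and> q = q' \<and> r = r' \<and> w = w'"
  apply (simp add: kr_def vec_eq_iff forall_4)
  apply (metis minus_equation_iff)
  done

lemma comm_h: "comm (kr (u + v * a) (v * b) (v * c) (u + v * d)) (kr (u' + v'*a) (v'*b) (v'*c) (u' + v'*d)) = 0"
  by (simp add: comm_def kr_def matrix_matrix_mult_def vec_eq_iff forall_4 sum_4 algebra_simps)

lemma ent: "(X ** Y) $ i $ j = X$i$1 * Y$1$j + X$i$2 * Y$2$j + X$i$3 * Y$3$j + X$i$4 * Y$4$j"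
  for X Y :: "real^4^4"
  by (simp add: matrix_matrix_mult_def sum_4)



lemma normalizer_sub:
  fixes X :: "real^4^4"
  assumes w1: "w1 \<noteq> 0" and w2: "w2 \<noteq> 0" and wbc: "w1 * b = w2 * c"
    and disc: "(a - d)\<^sup>2 + 4 * b * c \<noteq> 0"
    and Xsp: "X \<in> sp (kr w1 0 0 w2)"
    and C1: "comm X (kr 1 0 0 1) \<in> span {kr 1 0 0 1, kr a b c d}"
    and C2: "comm X (kr a b c d) \<in> span {kr 1 0 0 1, kr a b c d}"
  shows "X \<in> span {kr 1 0 0 1, kr a b c d}"
proof -
  from C1 obtain u1 v1 where C1': "comm X (kr 1 0 0 1) = kr (u1 + v1 * a) (v1 * b) (v1 * c) (u1 + v1 * d)"
    unfolding h_iff by blast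
  from C2 obtain u2 v2 where C2': "comm X (kr a b c d) = kr (u2 + v2 * a) (v2 * b) (v2 * c) (u2 + v2 * d)"
    unfolding h_iff by blast
  have st: "X$1$1 = X$2$2" "X$1$2 = - X$2$1" "X$1$3 = X$2$4" "X$1$4 = - X$2$3"
    "X$3$1 = X$4$2" "X$3$2 = - X$4$1" "X$3$3 = X$4$4" "X$3$4 = - X$4$3"
    using C1' by (simp_all add: vec_eq_iff forall_4 comm_def ent kr_def; linarith)+
  have spe: "w1 * X$1$1 = 0" "w2 * X$3$3 = 0" "w1 * X$1$3 = - w2 * X$3$1" "w1 * X$2$3 = w2 * X$4$1"
  proof -
    have Z: "(transpose X ** kr w1 0 0 w2 + kr w1 0 0 w2 ** X) $ i $ j = 0" for i j
      using Xsp by (simp add: sp_def)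
    have e12: "- (w1 * X$1$1) - w1 * X$2$2 = 0" using Z[of 1 2] by (simp add: ent kr_def transpose_def mult.commute)
    have e34: "- (w2 * X$3$3) - w2 * X$4$4 = 0" using Z[of 3 4] by (simp add: ent kr_def transpose_def mult.commute)
    have e14: "- (w2 * X$3$1) - w1 * X$2$4 = 0" using Z[of 1 4] by (simp add: ent kr_def transpose_def mult.commute)
    have e13: "w2 * X$4$1 - w1 * X$2$3 = 0" using Z[of 1 3] by (simp add: ent kr_def transpose_def mult.commute)
    show "w1 * X$1$1 = 0" "w2 * X$3$3 = 0" "w1 * X$1$3 = - w2 * X$3$1" "w1 * X$2$3 = w2 * X$4$1"
      using e12 e34 e14 e13 st by simp_all
  qed
  have x11: "X$1$1 = 0" "X$3$3 = 0" using spe(1,2) w1 w2 by auto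
  have ceq: "X$2$3 * c = b * X$4$1"
      "b * (X$2$1 - X$4$3) = X$2$3 * (a - d)"
      "c * (X$2$1 - X$4$3) = X$4$1 * (a - d)"
      "X$1$3 * (a - d) = - v2 * b"
      "X$3$1 * (d - a) = - v2 * c"
      "2 * (b * X$3$1 - c * X$1$3) = - v2 * (a - d)"
  proof -
    have R: "X$1$2 = - X$2$1" "X$2$4 = X$1$3" "X$1$4 = - X$2$3" "X$4$2 = X$3$1" "X$3$2 = - X$4$1"
      "X$3$4 = - X$4$3" "X$1$1 = 0" "X$2$2 = 0" "X$3$3 = 0" "X$4$4 = 0"
      using st x11 by simp_all
    have Z: "comm X (kr a b c d) $ i $ j = kr (u2 + v2 * a) (v2 * b) (v2 * c) (u2 + v2 * d) $ i $ j" for i j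
      using C2' by simp
    have e11: "X$1$2 * a + X$1$4 * c = -(a * X$2$1) - b * X$4$1"
      using Z[of 1 1] by (simp add: comm_def ent kr_def)
    have e13: "X$1$2 * b + X$1$4 * d = -(a * X$2$3) - b * X$4$3"
      using Z[of 1 3] by (simp add: comm_def ent kr_def)
    have e31: "X$3$2 * a + X$3$4 * c = -(c * X$2$1) - d * X$4$1"
      using Z[of 3 1] by (simp add: comm_def ent kr_def)
    have e14: "-(X$1$1 * b) - X$1$3 * d - (-(a * X$2$4) - b * X$4$4) = - (v2 * b)"
      using Z[of 1 4] by (simp add: comm_def ent kr_def)
    have e32: "-(X$3$1 * a) - X$3$3 * c - (-(c * X$2$2) - d * X$4$2) = - (v2 * c)"
      using Z[of 3 2] by (simp add: comm_def ent kr_def)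
    have e12: "-(X$1$1 * a) - X$1$3 * c - (-(a * X$2$2) - b * X$4$2) = - (u2 + v2 * a)"
      using Z[of 1 2] by (simp add: comm_def ent kr_def)
    have e34: "-(X$3$1 * b) - X$3$3 * d - (-(c * X$2$4) - d * X$4$4) = - (u2 + v2 * d)"
      using Z[of 3 4] by (simp add: comm_def ent kr_def)
    note E = e11 e13 e31 e14 e32 e12 e34
    show "X$2$3 * c = b * X$4$1"
      "b * (X$2$1 - X$4$3) = X$2$3 * (a - d)"
      "c * (X$2$1 - X$4$3) = X$4$1 * (a - d)"
      "X$1$3 * (a - d) = - v2 * b"
      "X$3$1 * (d - a) = - v2 * c"
      "2 * (b * X$3$1 - c * X$1$3) = - v2 * (a - d)"
      using E unfolding R by (simp_all add: algebra_simps; linarith)+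
  qed
  have "w2 * X$1$3 * ((a - d)\<^sup>2 + 4 * b * c) = 0"
    using ceq(4,5,6) spe(3) wbc by algebra
  with disc w2 have p0: "X$1$3 = 0" by simp
  with spe(3) w2 have q0: "X$3$1 = 0" by simp
  define \<beta> where "\<beta> = (if b \<noteq> 0 then X$2$3 / b else (X$2$1 - X$4$3) / (a - d))"
  define \<alpha> where "\<alpha> = X$4$3 - \<beta> * d"
  have Q: "X$2$1 = \<alpha> + \<beta> * a \<and> X$2$3 = \<beta> * b \<and> X$4$1 = \<beta> * c \<and> X$4$3 = \<alpha> + \<beta> * d"
  proof (cases "b = 0")
    case False
    have "X$4$1 = \<beta> * c" using ceq(1) False by (simp add: \<beta>_def field_simps)
    moreover have "X$2$1 = \<alpha> + \<beta> * a" using ceq(2) False by (simp add: \<alpha>_def \<beta>_def field_simps)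
    ultimately show ?thesis using False by (simp add: \<alpha>_def \<beta>_def)
  next
    case True
    with wbc w2 have c0: "c = 0" by simp
    with True disc have ad: "a - d \<noteq> 0" by simp
    have "X$2$3 = 0" using ceq(2) True ad by simp
    moreover have "X$4$1 = 0" using ceq(3) c0 ad by simp
    moreover have "X$2$1 = \<alpha> + \<beta> * a"
    proof -
      have "\<beta> * (a - d) = X$2$1 - X$4$3" using ad True by (simp add: \<beta>_def)
      then have "\<beta> * a - \<beta> * d = X$2$1 - X$4$3" by (simp add: algebra_simps)
      then show ?thesis unfolding \<alpha>_def by linarith
    qed
    ultimately show ?thesis using True c0 by (simp add: \<alpha>_def \<beta>_def)
  qed
  have "X = kr (\<alpha> + \<beta> * a) (\<beta> * b) (\<beta> * c) (\<alpha> + \<beta> * d)"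
    using st x11 p0 q0 Q by (simp add: vec_eq_iff forall_4 kr_def)
  then show ?thesis unfolding h_iff by blast
qed



lemma cartan_kr:
  assumes w1: "w1 \<noteq> 0" and w2: "w2 \<noteq> 0" and wbc: "w1 * b = w2 * c"
    and disc: "(a - d)\<^sup>2 + 4 * b * c \<noteq> 0"
  shows "cartan_subalgebra (kr w1 0 0 w2) (span {kr 1 0 0 1, kr a b c d})"
proof -
  let ?h = "span {kr 1 0 0 1, kr a b c d}"
  have hsp: "?h \<subseteq> sp (kr w1 0 0 w2)"
  proof
    fix x assume "x \<in> ?h"
    then obtain u v where "x = kr (u + v * a) (v * b) (v * c) (u + v * d)" unfolding h_iff by blast
    moreover have "w1 * (v * b) = w2 * (v * c)" using wbc by (simp add: algebra_simps)
    ultimately show "x \<in> sp (kr w1 0 0 w2)" using kr_sp by blast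
  qed
  have comm0: "comm A B = 0" if "A \<in> ?h" "B \<in> ?h" for A B
  proof -
    from that obtain u v u' v' where "A = kr (u + v * a) (v * b) (v * c) (u + v * d)"
      "B = kr (u' + v' * a) (v' * b) (v' * c) (u' + v' * d)" unfolding h_iff by blast
    then show ?thesis using comm_h by simp
  qed
  have nil: "nilpotent_lie ?h"
    unfolding nilpotent_lie_def
  proof (intro exI[of _ "Suc 0"])
    have "{comm A B | A B. A \<in> ?h \<and> B \<in> lcs ?h 0} = {0}"
    proof (intro set_eqI iffI)
      fix x assume "x \<in> {comm A B | A B. A \<in> ?h \<and> B \<in> lcs ?h 0}"
      then show "x \<in> {0}" using comm0 by auto
    next
      fix x :: "real^4^4" assume "x \<in> {0}"
      then have "x = comm 0 0" using comm0[OF span_zero span_zero] by simp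
      then show "x \<in> {comm A B | A B. A \<in> ?h \<and> B \<in> lcs ?h 0}"
        using span_zero by auto
    qed
    then show "lcs ?h (Suc 0) = {0}" by simp
  qed
  have norm: "{X \<in> sp (kr w1 0 0 w2). \<forall>A\<in>?h. comm X A \<in> ?h} = ?h"
  proof (intro set_eqI iffI)
    fix X assume "X \<in> {X \<in> sp (kr w1 0 0 w2). \<forall>A\<in>?h. comm X A \<in> ?h}"
    then have "X \<in> sp (kr w1 0 0 w2)" "comm X (kr 1 0 0 1) \<in> ?h" "comm X (kr a b c d) \<in> ?h"
      by (auto simp: span_base)
    then show "X \<in> ?h" using normalizer_sub[OF w1 w2 wbc disc] by blast
  next
    fix X assume "X \<in> ?h"
    then show "X \<in> {X \<in> sp (kr w1 0 0 w2). \<forall>A\<in>?h. comm X A \<in> ?h}"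
      using hsp comm0 span_zero by auto
  qed
  show ?thesis unfolding cartan_subalgebra_def
    using hsp comm0 nil norm span_zero by auto
qed

lemma not_cartan_kr:
  assumes w1: "w1 \<noteq> 0" and w2: "w2 \<noteq> 0" and wbc: "w1 * b = w2 * c"
    and disc: "(a - d)\<^sup>2 + 4 * b * c = 0"
  shows "\<not> cartan_subalgebra (kr w1 0 0 w2) (span {kr 1 0 0 1, kr a b c d})"
proof
  let ?h = "span {kr 1 0 0 1, kr a b c d}"
  assume cs: "cartan_subalgebra (kr w1 0 0 w2) ?h"
  define X :: "real^4^4" where "X = kI 0 w2 (- w1) 0"
  define v where "v = (if b = 0 then 0 else w2 * (d - a) / b)"
  define u where "u = v * (a + d) / 2"
  have Xsp: "X \<in> sp (kr w1 0 0 w2)"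
    by (simp add: X_def sp_def kI_def kr_def transpose_def matrix_matrix_mult_def vec_eq_iff forall_4 sum_4)
  have c1: "comm X (kr 1 0 0 1) = 0"
    by (simp add: X_def comm_def kI_def kr_def matrix_matrix_mult_def vec_eq_iff forall_4 sum_4)
  have c2: "comm X (kr a b c d) = kr (- u + v * a) (v * b) (v * c) (- u + v * d)"
  proof (cases "b = 0")
    case True
    with wbc w2 have c0: "c = 0" by simp
    with True disc have "a = d" by simp
    then show ?thesis using True c0
      by (simp add: u_def v_def X_def comm_def kI_def kr_def matrix_matrix_mult_def vec_eq_iff forall_4 sum_4)
  next
    case False
    have vb: "v * b = w2 * (d - a)" using False by (simp add: v_def)
    have key: "4 * w1 * b = v * (a - d)"
    proof -
      have "4 * w1 * b * b = v * b * (a - d)"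
        using vb disc wbc w2 by algebra
      then show ?thesis using False
        by (metis mult.commute mult.left_commute mult_right_cancel)
    qed
    have vc: "v * c = w1 * (d - a)"
    proof -
      have "w2 * (v * c) = w2 * (w1 * (d - a))" using vb wbc by algebra
      then show ?thesis using w2 by simp
    qed
    show ?thesis
      using vb vc key wbc unfolding kr_eq_iff[symmetric]
      apply (simp add: u_def X_def comm_def kI_def kr_def matrix_matrix_mult_def vec_eq_iff forall_4 sum_4)
      apply (simp add: algebra_simps field_simps)
      done
  qed
  have "X \<in> {X \<in> sp (kr w1 0 0 w2). \<forall>A\<in>?h. comm X A \<in> ?h}"
  proof (intro CollectI conjI ballI Xsp)
    fix A assume "A \<in> ?h"
    then obtain p q where A: "A = p *\<^sub>R kr 1 0 0 1 + q *\<^sub>R kr a b c d" unfolding span2_iff by blast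
    have "comm X A = p *\<^sub>R comm X (kr 1 0 0 1) + q *\<^sub>R comm X (kr a b c d)"
      unfolding A comm_def by (simp add: vec_eq_iff forall_4 ent algebra_simps)
    also have "\<dots> = kr (q * (- u + v * a)) (q * (v * b)) (q * (v * c)) (q * (- u + v * d))"
      by (simp add: c1 c2 kr_scale)
    also have "\<dots> \<in> ?h" unfolding h_iff
      by (rule exI[of _ "- q * u"], rule exI[of _ "q * v"]) (simp add: algebra_simps)
    finally show "comm X A \<in> ?h" .
  qed
  with cs have "X \<in> ?h" unfolding cartan_subalgebra_def by blast
  then obtain p q where "X = kr (p + q * a) (q * b) (q * c) (p + q * d)" unfolding h_iff by blast
  then have "X $ 1 $ 3 = 0" by (simp add: kr_def)
  moreover have "X $ 1 $ 3 = w2" by (simp add: X_def kI_def)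
  ultimately show False using w2 by simp
qed



lemma cpoly_roots:
  assumes "\<And>x. cpoly a b c d x = (x - r1) * (x - r2)"
  shows "{\<mu>. \<exists>x. cpoly a b c d x = 0 \<and> (\<mu> = \<i> * x \<or> \<mu> = - \<i> * x)} = {\<i> * r1, - \<i> * r1, \<i> * r2, - \<i> * r2}"
  using assms by auto

lemma ee_kr:
  assumes D: "(a - d)\<^sup>2 + 4 * b * c > 0"
  shows "\<exists>c1 c2 \<alpha> \<beta> :: real. \<alpha> \<noteq> \<beta> \<and> \<alpha> \<noteq> 0 \<and> \<beta> \<noteq> 0 \<and>
        ceigs (c1 *\<^sub>R kr 1 0 0 1 + c2 *\<^sub>R kr a b c d)
          = {\<i> * \<alpha>, - \<i> * \<alpha>, \<i> * \<beta>, - \<i> * \<beta>}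
        \<and> card {\<i> * complex_of_real \<alpha>, - \<i> * \<alpha>, \<i> * \<beta>, - \<i> * \<beta>} = 4"
proof -
  define r where "r = sqrt ((a - d)\<^sup>2 + 4 * b * c)"
  have r0: "r > 0" using D by (simp add: r_def)
  have r2: "r * r = (a - d)\<^sup>2 + 4 * b * c" using D by (simp add: r_def)
  define c1 where "c1 = r - (a + d) / 2"
  define \<alpha> where "\<alpha> = 3 * r / 2"
  define \<beta> where "\<beta> = r / 2"
  have comb: "c1 *\<^sub>R kr 1 0 0 1 + 1 *\<^sub>R kr a b c d = kr (c1 + a) b c (c1 + d)"
    using kr_lin[of c1 1 0 0 1 1 a b c d] by simp
  have fac: "cpoly (c1 + a) b c (c1 + d) x = (x - of_real \<alpha>) * (x - of_real \<beta>)" for x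
  proof -
    have e1: "(c1 + a) * (c1 + d) - b * c = \<alpha> * \<beta>"
      unfolding c1_def \<alpha>_def \<beta>_def using r2 by (simp add: field_simps power2_eq_square)
    have e2: "(c1 + a) + (c1 + d) = \<alpha> + \<beta>"
      unfolding c1_def \<alpha>_def \<beta>_def by simp
    note e = e1 e2
    have "cpoly (c1 + a) b c (c1 + d) x = x * x - of_real ((c1 + a) + (c1 + d)) * x + of_real ((c1 + a) * (c1 + d) - b * c)"
      unfolding cpoly_def by (simp add: algebra_simps)
    also have "\<dots> = (x - of_real \<alpha>) * (x - of_real \<beta>)"
      unfolding e by (simp add: algebra_simps)
    finally show ?thesis .
  qed
  have ceq: "ceigs (c1 *\<^sub>R kr 1 0 0 1 + 1 *\<^sub>R kr a b c d) = {\<i> * \<alpha>, - \<i> * \<alpha>, \<i> * \<beta>, - \<i> * \<beta>}"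
    unfolding comb ceigs_kr by (rule cpoly_roots[OF fac])
  have ab: "\<alpha> \<noteq> \<beta>" "\<alpha> \<noteq> 0" "\<beta> \<noteq> 0" "\<alpha> \<noteq> - \<beta>" using r0 by (simp_all add: \<alpha>_def \<beta>_def)
  have card: "card {\<i> * complex_of_real \<alpha>, - \<i> * \<alpha>, \<i> * \<beta>, - \<i> * \<beta>} = 4"
    using ab by (simp add: complex_eq_iff)
  show ?thesis using ceq ab card by blast
qed

lemma ff_kr:
  assumes D: "(a - d)\<^sup>2 + 4 * b * c < 0"
  shows "\<exists>c1 c2 \<alpha> \<beta> :: real. \<alpha> \<noteq> 0 \<and> \<beta> \<noteq> 0 \<and>
        ceigs (c1 *\<^sub>R kr 1 0 0 1 + c2 *\<^sub>R kr a b c d)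
          = {Complex \<alpha> \<beta>, Complex \<alpha> (-\<beta>), Complex (-\<alpha>) \<beta>, Complex (-\<alpha>) (-\<beta>)}"
proof -
  define q where "q = sqrt (- ((a - d)\<^sup>2 + 4 * b * c)) / 2"
  have q0: "q > 0" using D by (simp add: q_def)
  have q2: "4 * (q * q) = - ((a - d)\<^sup>2 + 4 * b * c)" using D by (simp add: q_def)
  define c1 where "c1 = 1 - (a + d) / 2"
  have comb: "c1 *\<^sub>R kr 1 0 0 1 + 1 *\<^sub>R kr a b c d = kr (c1 + a) b c (c1 + d)"
    using kr_lin[of c1 1 0 0 1 1 a b c d] by simp
  have fac: "cpoly (c1 + a) b c (c1 + d) x = (x - Complex 1 q) * (x - Complex 1 (-q))" for x
  proof -
    have e1: "(c1 + a) * (c1 + d) - b * c = 1 + q * q"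
      unfolding c1_def using q2 by (simp add: field_simps power2_eq_square)
    have e2: "(c1 + a) + (c1 + d) = 2"
      unfolding c1_def by simp
    note e = e1 e2
    have "cpoly (c1 + a) b c (c1 + d) x = x * x - of_real ((c1 + a) + (c1 + d)) * x + of_real ((c1 + a) * (c1 + d) - b * c)"
      unfolding cpoly_def by (simp add: algebra_simps)
    also have "\<dots> = (x - Complex 1 q) * (x - Complex 1 (-q))"
      unfolding e by (simp add: algebra_simps complex_eq_iff)
    finally show ?thesis .
  qed
  have ceq: "ceigs (c1 *\<^sub>R kr 1 0 0 1 + 1 *\<^sub>R kr a b c d) = {Complex q 1, Complex q (-1), Complex (-q) 1, Complex (-q) (-1)}"
    unfolding comb ceigs_kr cpoly_roots[OF fac] by (auto simp: complex_eq_iff)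
  show ?thesis using ceq q0 by (intro exI[of _ c1] exI[of _ 1] exI[of _ q] exI[of _ 1]) simp
qed



definition discr :: "real \<Rightarrow> real \<Rightarrow> real \<Rightarrow> real \<Rightarrow> real \<Rightarrow> real" where "discr R1 R2 t e1 e2 = (aH R1 t e2 - dH R2 t e1 e2)\<^sup>2 + 4 * bH R1 t e1 * cH R2 t"

lemma pole_setup:
  assumes "e1 = 1 \<or> e1 = -1" "e2 = 1 \<or> e2 = -1" "0 < R1" "0 < R2"
  shows "A_L R1 R2 e1 e2 = kr 1 0 0 1"
    "A_H R1 R2 tt e1 e2 = kr (aH R1 tt e2) (bH R1 tt e1) (cH R2 tt) (dH R2 tt e1 e2)"
    "omega_mat R1 R2 e1 0 = kr (e1 * R1) 0 0 R2"
    "e1 * R1 \<noteq> 0" "(e1 * R1) * bH R1 tt e1 = R2 * cH R2 tt"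
  using assms by (auto simp: AL_eq AH_eq omega0 bH_def cH_def)

lemma pole_ee:
  assumes "e1 = 1 \<or> e1 = -1" "e2 = 1 \<or> e2 = -1" "0 < R1" "0 < R2"
    and D: "discr R1 R2 t e1 e2 > 0"
  shows "nondegenerate_pole R1 R2 t e1 e2 \<and> elliptic_elliptic_pole R1 R2 t e1 e2"
proof -
  note S = pole_setup[OF assms(1-4)]
  have "nondegenerate_pole R1 R2 t e1 e2"
    unfolding nondegenerate_pole_def S(1,2,3)
    by (rule cartan_kr) (use S(4,5) assms D in \<open>auto simp: discr_def\<close>)
  moreover have "elliptic_elliptic_pole R1 R2 t e1 e2"
    unfolding elliptic_elliptic_pole_def S(1,2)
    by (rule ee_kr) (use D in \<open>simp add: discr_def\<close>)
  ultimately show ?thesis by blast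
qed

lemma pole_ff:
  assumes "e1 = 1 \<or> e1 = -1" "e2 = 1 \<or> e2 = -1" "0 < R1" "0 < R2"
    and D: "discr R1 R2 t e1 e2 < 0"
  shows "nondegenerate_pole R1 R2 t e1 e2 \<and> focus_focus_pole R1 R2 t e1 e2"
proof -
  note S = pole_setup[OF assms(1-4)]
  have "nondegenerate_pole R1 R2 t e1 e2"
    unfolding nondegenerate_pole_def S(1,2,3)
    by (rule cartan_kr) (use S(4,5) assms D in \<open>auto simp: discr_def\<close>)
  moreover have "focus_focus_pole R1 R2 t e1 e2"
    unfolding focus_focus_pole_def S(1,2)
    by (rule ff_kr) (use D in \<open>simp add: discr_def\<close>)
  ultimately show ?thesis by blast
qed

lemma pole_deg:
  assumes "e1 = 1 \<or> e1 = -1" "e2 = 1 \<or> e2 = -1" "0 < R1" "0 < R2"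
    and D: "discr R1 R2 t e1 e2 = 0"
  shows "\<not> nondegenerate_pole R1 R2 t e1 e2"
proof -
  note S = pole_setup[OF assms(1-4)]
  show ?thesis
    unfolding nondegenerate_pole_def S(1,2,3)
    by (rule not_cartan_kr) (use S(4,5) assms D in \<open>auto simp: discr_def\<close>)
qed



lemma discr_poly:
  assumes "0 < R1" "0 < R2" "e1 = 1 \<or> e1 = -1"
  shows "discr R1 R2 t e1 e2 * (R1 * R2)\<^sup>2 = ((1 - t + t * e2) * R2 - t * e1 * e2 * R1)\<^sup>2 + 4 * e1 * t\<^sup>2 * R1 * R2"
  using assms by (auto simp: discr_def aH_def bH_def cH_def dH_def field_simps power2_eq_square)

lemma sign_from_poly:
  assumes "0 < R1" "0 < R2" "discr R1 R2 t e1 e2 * (R1 * R2)\<^sup>2 = P"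
  shows "(discr R1 R2 t e1 e2 > 0 \<longleftrightarrow> P > 0) \<and> (discr R1 R2 t e1 e2 < 0 \<longleftrightarrow> P < 0) \<and> (discr R1 R2 t e1 e2 = 0 \<longleftrightarrow> P = 0)"
proof -
  have "(R1 * R2)\<^sup>2 > 0" using assms by simp
  then show ?thesis using assms(3)
    by (auto simp: zero_less_mult_iff mult_less_0_iff)
qed

lemma disc_pp: assumes "0 < R1" "0 < R2" "0 \<le> t" shows "discr R1 R2 t 1 1 > 0"
proof -
  have P: "discr R1 R2 t 1 1 * (R1 * R2)\<^sup>2 = (R2 - t * R1)\<^sup>2 + 4 * t\<^sup>2 * R1 * R2"
    using discr_poly[OF assms(1,2), of 1 t 1] by simp
  have "(R2 - t * R1)\<^sup>2 + 4 * t\<^sup>2 * R1 * R2 > 0"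
  proof (cases "t = 0")
    case True then show ?thesis using assms by simp
  next
    case False
    then have "4 * t\<^sup>2 * R1 * R2 > 0" using assms by simp
    then show ?thesis using zero_le_power2[of "R2 - t * R1"] by linarith
  qed
  then show ?thesis using sign_from_poly[OF assms(1,2) P] by blast
qed

lemma disc_pm: assumes "0 < R1" "0 < R2" "0 \<le> t" shows "discr R1 R2 t 1 (-1) > 0"
proof -
  have P: "discr R1 R2 t 1 (-1) * (R1 * R2)\<^sup>2 = ((1 - 2 * t) * R2 + t * R1)\<^sup>2 + 4 * t\<^sup>2 * R1 * R2"
    using discr_poly[OF assms(1,2), of 1 t "-1"] by simp
  have "((1 - 2 * t) * R2 + t * R1)\<^sup>2 + 4 * t\<^sup>2 * R1 * R2 > 0"
  proof (cases "t = 0")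
    case True then show ?thesis using assms by simp
  next
    case False
    then have "4 * t\<^sup>2 * R1 * R2 > 0" using assms by simp
    then show ?thesis using zero_le_power2[of "(1 - 2 * t) * R2 + t * R1"] by linarith
  qed
  then show ?thesis using sign_from_poly[OF assms(1,2) P] by blast
qed

lemma disc_mp: assumes "0 < R1" "R1 < R2" "0 \<le> t" "t \<le> 1" shows "discr R1 R2 t (-1) 1 > 0"
proof -
  have R2: "0 < R2" using assms by simp
  have P: "discr R1 R2 t (-1) 1 * (R1 * R2)\<^sup>2 = (R2 - t * R1)\<^sup>2 + 4 * t * (1 - t) * R1 * R2"
    using discr_poly[OF assms(1) R2, of "-1" t 1] by (simp add: power2_eq_square algebra_simps)
  have "t * R1 \<le> 1 * R1" by (rule mult_right_mono) (use assms in auto)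
  then have "t * R1 < R2" using assms by linarith
  then have "(R2 - t * R1)\<^sup>2 > 0" by simp
  moreover have "4 * t * (1 - t) * R1 * R2 \<ge> 0" using assms by (intro mult_nonneg_nonneg) auto
  ultimately have "(R2 - t * R1)\<^sup>2 + 4 * t * (1 - t) * R1 * R2 > 0" by linarith
  then show ?thesis using sign_from_poly[OF assms(1) R2 P] by blast
qed

lemma disc_mm:
  assumes "0 < R1" "R1 < R2"
  shows "(t < t_minus R1 R2 \<or> t > t_plus R1 R2 \<longrightarrow> discr R1 R2 t (-1) (-1) > 0)
    \<and> (t_minus R1 R2 < t \<and> t < t_plus R1 R2 \<longrightarrow> discr R1 R2 t (-1) (-1) < 0)
    \<and> (t = t_minus R1 R2 \<or> t = t_plus R1 R2 \<longrightarrow> discr R1 R2 t (-1) (-1) = 0)"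
proof -
  have R2: "0 < R2" using assms by simp
  define s where "s = sqrt (R1 * R2)"
  have s0: "s > 0" using assms by (simp add: s_def)
  have ss: "s * s = R1 * R2" using assms by (simp add: s_def)
  define Dp where "Dp = 2 * R2 + R1 + 2 * s"
  define Dm where "Dm = 2 * R2 + R1 - 2 * s"
  have "s \<le> (R1 + R2) / 2"
  proof -
    have a1: "(2 * s)\<^sup>2 = 4 * (R1 * R2)" using ss by (simp add: power2_eq_square)
    have a2: "(R1 + R2)\<^sup>2 - 4 * (R1 * R2) = (R1 - R2)\<^sup>2" by (simp add: power2_eq_square algebra_simps)
    have "(2 * s)\<^sup>2 \<le> (R1 + R2)\<^sup>2" using a1 a2 zero_le_power2[of "R1 - R2"] by linarith
    then have "2 * s \<le> R1 + R2" by (rule power2_le_imp_le) (use assms in auto)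
    then show ?thesis by simp
  qed
  then have Dm0: "Dm > 0" using assms by (simp add: Dm_def)
  have Dp0: "Dp > 0" using assms s0 by (simp add: Dp_def)
  have tm: "t_minus R1 R2 = R2 / Dp" by (simp add: t_minus_def Dp_def s_def)
  have tp: "t_plus R1 R2 = R2 / Dm" by (simp add: t_plus_def Dm_def s_def)
  have P: "discr R1 R2 t (-1) (-1) * (R1 * R2)\<^sup>2 = (R2 - t * Dp) * (R2 - t * Dm)"
  proof -
    have P1: "discr R1 R2 t (-1) (-1) * (R1 * R2)\<^sup>2 = ((1 - 2 * t) * R2 - t * R1)\<^sup>2 - 4 * t\<^sup>2 * (R1 * R2)"
      using discr_poly[OF assms(1) R2, of "-1" t "-1"] by (simp add: algebra_simps)
    have P2: "(R2 - t * Dp) * (R2 - t * Dm) = ((1 - 2 * t) * R2 - t * R1)\<^sup>2 - 4 * t\<^sup>2 * (s * s)"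
      by (simp add: Dp_def Dm_def power2_eq_square algebra_simps)
    show ?thesis using P1 P2 ss by simp
  qed
  note sg = sign_from_poly[OF assms(1) R2 P]
  have f1: "R2 - t * Dp > 0 \<longleftrightarrow> t < t_minus R1 R2" "R2 - t * Dp < 0 \<longleftrightarrow> t > t_minus R1 R2"
    "R2 - t * Dp = 0 \<longleftrightarrow> t = t_minus R1 R2"
    unfolding tm using Dp0 by (auto simp: field_simps)
  have f2: "R2 - t * Dm > 0 \<longleftrightarrow> t < t_plus R1 R2" "R2 - t * Dm < 0 \<longleftrightarrow> t > t_plus R1 R2"
    "R2 - t * Dm = 0 \<longleftrightarrow> t = t_plus R1 R2"
    unfolding tp using Dm0 by (auto simp: field_simps)
  have mlt: "t_minus R1 R2 < t_plus R1 R2"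
    unfolding tm tp using Dm0 Dp0 R2 s0 by (simp add: Dp_def Dm_def frac_less2)
  show ?thesis
  proof (intro conjI impI)
    assume "t < t_minus R1 R2 \<or> t > t_plus R1 R2"
    then show "discr R1 R2 t (-1) (-1) > 0"
    proof
      assume "t < t_minus R1 R2"
      then have "R2 - t * Dp > 0" "R2 - t * Dm > 0" using f1 f2 mlt by auto
      then show ?thesis using sg by simp
    next
      assume "t > t_plus R1 R2"
      then have "R2 - t * Dp < 0" "R2 - t * Dm < 0" using f1 f2 mlt by auto
      then show ?thesis using sg by (simp add: mult_neg_neg)
    qed
  next
    assume "t_minus R1 R2 < t \<and> t < t_plus R1 R2"
    then have "R2 - t * Dp < 0" "R2 - t * Dm > 0" using f1 f2 by auto
    then show "discr R1 R2 t (-1) (-1) < 0" using sg by (simp add: mult_neg_pos)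
  next
    assume "t = t_minus R1 R2 \<or> t = t_plus R1 R2"
    then have "R2 - t * Dp = 0 \<or> R2 - t * Dm = 0" using f1 f2 by auto
    then show "discr R1 R2 t (-1) (-1) = 0" using sg by auto
  qed
qed

theorem proposition5p8:
  fixes R1 R2 t :: real
  assumes "0 < R1" and "R1 < R2" and "0 \<le> t" and "t \<le> 1"
  shows "{p. fixed_point R1 R2 t p} = {pole 1 1, pole 1 (-1), pole (-1) 1, pole (-1) (-1)}
    \<and> (\<forall>(e1, e2) \<in> {(1, 1), (1, -1), (-1, 1)}.
          nondegenerate_pole R1 R2 t e1 e2 \<and> elliptic_elliptic_pole R1 R2 t e1 e2)
    \<and> ((t < t_minus R1 R2 \<or> t > t_plus R1 R2) \<longrightarrow>
          nondegenerate_pole R1 R2 t (-1) (-1) \<and> elliptic_elliptic_pole R1 R2 t (-1) (-1))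
    \<and> ((t_minus R1 R2 < t \<and> t < t_plus R1 R2) \<longrightarrow>
          nondegenerate_pole R1 R2 t (-1) (-1) \<and> focus_focus_pole R1 R2 t (-1) (-1))
    \<and> ((t = t_minus R1 R2 \<or> t = t_plus R1 R2) \<longrightarrow> \<not> nondegenerate_pole R1 R2 t (-1) (-1))"
proof -
  have R2: "0 < R2" using assms by simp
  have A: "{p. fixed_point R1 R2 t p} = {pole 1 1, pole 1 (-1), pole (-1) 1, pole (-1) (-1)}"
    by (rule fixed_set[OF assms(1) R2])
  have B: "\<forall>(e1, e2) \<in> {(1, 1), (1, -1), (-1, 1)}.
          nondegenerate_pole R1 R2 t e1 e2 \<and> elliptic_elliptic_pole R1 R2 t e1 e2"
    using pole_ee[OF _ _ assms(1) R2, of 1 1 t] pole_ee[OF _ _ assms(1) R2, of 1 "-1" t]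
      pole_ee[OF _ _ assms(1) R2, of "-1" 1 t]
      disc_pp[OF assms(1) R2 assms(3)] disc_pm[OF assms(1) R2 assms(3)] disc_mp[OF assms]
    by auto
  note mm = disc_mm[OF assms(1,2), of t]
  show ?thesis
    using A B mm pole_ee[OF _ _ assms(1) R2, of "-1" "-1" t] pole_ff[OF _ _ assms(1) R2, of "-1" "-1" t]
      pole_deg[OF _ _ assms(1) R2, of "-1" "-1" t]
    by auto
qed


end
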